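(* Let $A=\{a_{ij}: i,j\ge1\}$ with $a_{ij}\prec a_{kl}$ iff $j=k$. For a permutation $\sigma\in\mathfrak S_n$ define $$\mathbf S^\sigma(A)=\sum_{i_1,\dots,i_n\ge1}a_{i_{\sigma^{-1}(1)}i_1}a_{i_{\sigma^{-1}(2)}i_2}\cdots a_{i_{\sigma^{-1}(n)}i_n}.$$ Then: (i) $\mathbf S^\sigma(A)$ equals the sum of all words $w_1\cdots w_n$ over $A$ with $w_j\prec w_{\sigma(j)}$ for all $j\in[n]$; (ii) the $\mathbf S^\sigma$, $\sigma$ ranging over all permutations of all $[n]$, $n\ge0$, are linearly independent; (iii) $\mathbf S^\sigma\mathbf S^\tau=\mathbf S^{\sigma\bullet\tau}$; (iv) defining $\mathbf S^\sigma(A\oplus B)$ as the sum of all words $w$ over $A\oplus B$ with $w_j\prec w_{\sigma(j)}$ for all $j$, and letting letters of $A$ commute with those of $B$, $$\mathbf S^\sigma(A\oplus B)=\sum_{C}\mathbf S^{\mathrm{std}(\sigma_{|[n]\setminus U_C})}(A)\,\mathbf S^{\mathrm{std}(\sigma_{|U_C})}(B),$$ the sum over all sets $C$ of cycles of $\sigma$, where $U_C$ is the union of the supports of the cycles in $C$. Thus the span of the $\mathbf S^\sigma$ with coproduct $\Delta F=F(A\oplus B)$ is a Hopf algebra isomorphic to the Grossman–Larson-type cocommutative Hopf algebra $\mathbf{SGSym}$ of permutations.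
   Context: $\sigma\bullet\tau$ denotes shifted concatenation: for $\sigma\in\mathfrak S_n,\tau\in\mathfrak S_m$, the permutation of $[n+m]$ with word $\sigma(1)\cdots\sigma(n)(\tau(1)+n)\cdots(\tau(m)+n)$. $B=\{b_{ij}:i,j\ge1\}$ is a disjoint copy of $A$ with the same relation; $A\oplus B$ is the disjoint union with the relations of $A$ and of $B$ together with $a\prec b$ for all $a\in A$, $b\in B$ (never $b\prec a$). For $U\subseteq[n]$ stable under a function $f$, $\mathrm{std}(f_{|U})=\tau_U\circ f_{|U}\circ\tau_U^{-1}$ where $\tau_U:U\to[|U|]$ is the increasing bijection. $\mathbf{SGSym}$ is the Hopf algebra with basis $\mathbf S^\sigma$ (all permutations), product $\mathbf S^\sigma\mathbf S^\tau=\mathbf S^{\sigma\bullet\tau}$ and coproduct obtained by splitting the set of cycles of $\sigma$ in two parts in all ways and standardizing, as in (iv). *)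

theory Defs
  imports "HOL-Combinatorics.Permutations"
begin

text \<open>Letters a_ij are pairs (i,j) of positive naturals.
  Noncommutative formal series with coefficients in 'k are functions word => 'k.
  Word positions are 1-based in the paper: w_j is w ! (j - 1).\<close>

type_synonym letter = "nat \<times> nat"

definition letters :: "letter set" where
  "letters = {(i, j). 1 \<le> i \<and> 1 \<le> j}"

definition prec :: "letter \<Rightarrow> letter \<Rightarrow> bool" where
  "prec x y \<longleftrightarrow> snd x = fst y"

text \<open>S^sigma(A) defined by the sum formula: the coefficient of a word w is the
  number of index tuples (i_1,...,i_n) of positive integers whose monomial
  a_{i_{sigma^-1(1)} i_1} ... a_{i_{sigma^-1(n)} i_n} equals w.
  Tuples are encoded as functions vanishing outside {1..n}.\<close>
definition S :: "(nat \<Rightarrow> nat) \<Rightarrow> nat \<Rightarrow> letter list \<Rightarrow> 'k::comm_ring_1" where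
  "S \<sigma> n w = of_nat (card {i :: nat \<Rightarrow> nat.
      (\<forall>j\<in>{1..n}. 1 \<le> i j) \<and> (\<forall>j. j \<notin> {1..n} \<longrightarrow> i j = 0) \<and>
      w = map (\<lambda>j. (i (inv_into {1..n} \<sigma> j), i j)) [1..<n+1]})"

definition S_words :: "(nat \<Rightarrow> nat) \<Rightarrow> nat \<Rightarrow> letter list \<Rightarrow> 'k::comm_ring_1" where
  "S_words \<sigma> n w = (if w \<in> lists letters \<and> length w = n \<and>
      (\<forall>j\<in>{1..n}. prec (w ! (j - 1)) (w ! (\<sigma> j - 1))) then 1 else 0)"

definition series_mult :: "(letter list \<Rightarrow> 'k::comm_ring_1) \<Rightarrow> (letter list \<Rightarrow> 'k) \<Rightarrow> letter list \<Rightarrow> 'k" where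
  "series_mult F G w = (\<Sum>k\<in>{0..length w}. F (take k w) * G (drop k w))"

definition shift_concat :: "(nat \<Rightarrow> nat) \<Rightarrow> nat \<Rightarrow> (nat \<Rightarrow> nat) \<Rightarrow> nat \<Rightarrow> nat \<Rightarrow> nat" where
  "shift_concat \<sigma> n \<tau> m = (\<lambda>i. if 1 \<le> i \<and> i \<le> n then \<sigma> i
      else if n < i \<and> i \<le> n + m then \<tau> (i - n) + n else i)"

text \<open>Alphabet A \<oplus> B: Inl (i,j) = a_ij, Inr (i,j) = b_ij.\<close>
fun precAB :: "letter + letter \<Rightarrow> letter + letter \<Rightarrow> bool" where
  "precAB (Inl x) (Inl y) = prec x y"
| "precAB (Inr x) (Inr y) = prec x y"
| "precAB (Inl x) (Inr y) = True"
| "precAB (Inr x) (Inl y) = False"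

definition S_AB :: "(nat \<Rightarrow> nat) \<Rightarrow> nat \<Rightarrow> (letter + letter) list \<Rightarrow> 'k::comm_ring_1" where
  "S_AB \<sigma> n w = (if w \<in> lists (Inl ` letters \<union> Inr ` letters) \<and> length w = n \<and>
      (\<forall>j\<in>{1..n}. precAB (w ! (j - 1)) (w ! (\<sigma> j - 1))) then 1 else 0)"

text \<open>Letting letters of A commute with letters of B: the image of a series over
  A \<oplus> B in K<A> \<otimes> K<B>; coefficient of u \<otimes> v is the sum of the coefficients
  of all words whose A-subword is u and whose B-subword is v.\<close>
definition projA :: "(letter + letter) list \<Rightarrow> letter list" where
  "projA w = map projl (filter isl w)"
definition projB :: "(letter + letter) list \<Rightarrow> letter list" where
  "projB w = map projr (filter (\<lambda>x. \<not> isl x) w)"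

definition commute_image :: "((letter + letter) list \<Rightarrow> 'k::comm_ring_1) \<Rightarrow> letter list \<Rightarrow> letter list \<Rightarrow> 'k" where
  "commute_image F u v = (\<Sum>w\<in>{w. projA w = u \<and> projB w = v}. F w)"

text \<open>Cycles of sigma (as their supports, fixed points included) and standardization.\<close>
definition orbit_of :: "(nat \<Rightarrow> nat) \<Rightarrow> nat \<Rightarrow> nat set" where
  "orbit_of \<sigma> x = {(\<sigma> ^^ k) x | k. True}"

definition cycles :: "(nat \<Rightarrow> nat) \<Rightarrow> nat \<Rightarrow> nat set set" where
  "cycles \<sigma> n = {orbit_of \<sigma> x | x. x \<in> {1..n}}"

definition rank :: "nat set \<Rightarrow> nat \<Rightarrow> nat" where
  "rank U x = card {y \<in> U. y \<le> x}"

definition std :: "(nat \<Rightarrow> nat) \<Rightarrow> nat set \<Rightarrow> nat \<Rightarrow> nat" where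
  "std f U = (\<lambda>k. if k \<in> {1..card U} then rank U (f (the_inv_into U (rank U) k)) else k)"

end

theory Submission
  imports Defs "HOL-Combinatorics.Orbits"
begin


lemma perm_facts:
  assumes p: "\<sigma> permutes {1..n}" and j: "j \<in> {1..n}"
  shows "inv_into {1..n} \<sigma> j \<in> {1..n}" "\<sigma> (inv_into {1..n} \<sigma> j) = j"
    "inv_into {1..n} \<sigma> (\<sigma> j) = j" "\<sigma> j \<in> {1..n}"
proof -
  have b: "bij_betw \<sigma> {1..n} {1..n}" using p by (rule permutes_imp_bij)
  show "inv_into {1..n} \<sigma> j \<in> {1..n}" using b j by (metis bij_betw_imp_surj_on inv_into_into)
  show "\<sigma> (inv_into {1..n} \<sigma> j) = j" using b j by (simp add: bij_betw_inv_into_right)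
  show "inv_into {1..n} \<sigma> (\<sigma> j) = j" using b j by (simp add: bij_betw_inv_into_left)
  show "\<sigma> j \<in> {1..n}" using permutes_in_image[OF p] j by blast
qed

lemma set_map_upt: "x \<in> set (map f [1..<n+1]) \<Longrightarrow> \<exists>j\<in>{1..n}. x = f j"
  by (auto simp del: upt_Suc)

lemma map_upt_nth: "j \<in> {1..n} \<Longrightarrow> map f [1..<n+1] ! (j - 1) = f j"
  by (subst nth_map) (auto simp del: upt_Suc)

lemma S_eq_words:
  assumes p: "\<sigma> permutes {1..n}"
  shows "S \<sigma> n w = S_words \<sigma> n w"
proof -
  let ?inv = "inv_into {1..n} \<sigma>"
  let ?P = "w \<in> lists letters \<and> length w = n \<and>
      (\<forall>j\<in>{1..n}. prec (w ! (j - 1)) (w ! (\<sigma> j - 1)))"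
  let ?I = "{i :: nat \<Rightarrow> nat.
      (\<forall>j\<in>{1..n}. 1 \<le> i j) \<and> (\<forall>j. j \<notin> {1..n} \<longrightarrow> i j = 0) \<and>
      w = map (\<lambda>j. (i (?inv j), i j)) [1..<n+1]}"
  define i0 where "i0 = (\<lambda>j. if j \<in> {1..n} then snd (w ! (j - 1)) else 0)"
  have 1: "?I \<subseteq> {i0}"
  proof
    fix i assume "i \<in> ?I"
    hence i: "\<forall>j\<in>{1..n}. 1 \<le> i j" "\<forall>j. j \<notin> {1..n} \<longrightarrow> i j = 0"
      "w = map (\<lambda>j. (i (?inv j), i j)) [1..<n+1]" by auto
    have "i = i0"
    proof
      fix j show "i j = i0 j"
      proof (cases "j \<in> {1..n}")
        case True
        then have "w ! (j - 1) = (i (?inv j), i j)" by (simp only: i(3) map_upt_nth[OF True])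
        then show ?thesis using True by (simp add: i0_def)
      qed (use i in \<open>auto simp: i0_def\<close>)
    qed
    thus "i \<in> {i0}" by simp
  qed
  have 2: "?I \<noteq> {} \<Longrightarrow> ?P"
  proof -
    assume "?I \<noteq> {}"
    then obtain i where "i \<in> ?I" by blast
    hence i: "\<forall>j\<in>{1..n}. 1 \<le> i j" "\<forall>j. j \<notin> {1..n} \<longrightarrow> i j = 0"
      "w = map (\<lambda>j. (i (?inv j), i j)) [1..<n+1]" by auto
    have wj: "w ! (j - 1) = (i (?inv j), i j)" if "j \<in> {1..n}" for j
      by (simp only: i(3) map_upt_nth[OF that])
    have "set w \<subseteq> letters"
    proof
      fix x assume xw: "x \<in> set w"
      obtain j where j: "j \<in> {1..n}" and x: "x = (i (?inv j), i j)"
        using set_map_upt[of x "\<lambda>j. (i (?inv j), i j)" n] xw i(3) by blast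
      have "1 \<le> i (?inv j)" "1 \<le> i j" using i(1) perm_facts(1)[OF p j] j by blast+
      then show "x \<in> letters" using x by (simp add: letters_def)
    qed
    hence "w \<in> lists letters" by auto
    moreover have "length w = n" using i(3) by simp
    moreover have "prec (w ! (j - 1)) (w ! (\<sigma> j - 1))" if "j \<in> {1..n}" for j
      using wj[OF that] wj[OF perm_facts(4)[OF p that]] perm_facts(3)[OF p that]
      by (simp add: prec_def)
    ultimately show ?P by blast
  qed
  have 3: "?P \<Longrightarrow> i0 \<in> ?I"
  proof -
    assume P: ?P
    have "(\<forall>j\<in>{1..n}. 1 \<le> i0 j)"
    proof
      fix j assume j: "j \<in> {1..n}"
      then have "w ! (j - 1) \<in> set w" using P by auto
      then show "1 \<le> i0 j" using P j by (auto simp: i0_def letters_def)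
    qed
    moreover have "(\<forall>j. j \<notin> {1..n} \<longrightarrow> i0 j = 0)" by (simp add: i0_def)
    moreover have "w = map (\<lambda>j. (i0 (?inv j), i0 j)) [1..<n+1]"
    proof (rule nth_equalityI)
      show "length w = length (map (\<lambda>j. (i0 (?inv j), i0 j)) [1..<n+1])" using P by simp
    next
      fix k assume "k < length w"
      then have k: "k < n" using P by simp
      let ?j = "Suc k"
      have j: "?j \<in> {1..n}" using k by simp
      have ij: "?inv ?j \<in> {1..n}" "\<sigma> (?inv ?j) = ?j" using perm_facts[OF p j] by auto
      have "prec (w ! (?inv ?j - 1)) (w ! (\<sigma> (?inv ?j) - 1))" using P ij(1) by blast
      hence fk: "fst (w ! k) = snd (w ! (?inv ?j - 1))" using ij(2) by (simp add: prec_def)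
      show "w ! k = map (\<lambda>j. (i0 (?inv j), i0 j)) [1..<n+1] ! k"
      proof -
        have "map (\<lambda>j. (i0 (?inv j), i0 j)) [1..<n+1] ! k = (i0 (?inv ?j), i0 ?j)"
          using map_upt_nth[OF j, of "\<lambda>j. (i0 (?inv j), i0 j)"] by simp
        also have "\<dots> = (snd (w ! (?inv ?j - 1)), snd (w ! k))"
          using ij(1) j by (simp add: i0_def)
        also have "\<dots> = w ! k" using fk by (simp add: prod_eq_iff)
        finally show ?thesis by simp
      qed
    qed
    ultimately show "i0 \<in> ?I" by blast
  qed
  have eqS: "S \<sigma> n w = of_nat (card ?I)" unfolding S_def by (rule refl)
  have eqW: "S_words \<sigma> n w = (if ?P then 1 else 0)" unfolding S_words_def by (rule refl)
  show ?thesis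
  proof (cases ?P)
    case True
    have eqI: "?I = {i0}"
    proof (rule subset_antisym[OF 1])
      show "{i0} \<subseteq> ?I" using 3[OF True] by (simp only: insert_subset empty_subsetI simp_thms)
    qed
    have c: "card ?I = 1" unfolding eqI by simp
    show ?thesis unfolding eqS eqW c if_P[OF True] by simp
  next
    case False
    have "?I = {}"
    proof (rule ccontr)
      assume "?I \<noteq> {}" then show False using 2 False by blast
    qed
    then have c: "card ?I = 0" by (simp only: card.empty)
    show ?thesis unfolding eqS eqW c if_not_P[OF False] by simp
  qed
qed



definition wit :: "(nat \<Rightarrow> nat) \<Rightarrow> nat \<Rightarrow> letter list" where
  "wit \<sigma> n = map (\<lambda>j. (inv_into {1..n} \<sigma> j, j)) [1..<n+1]"

lemma permutes_ext:
  assumes "\<sigma> permutes X" "\<tau> permutes X" "\<forall>x\<in>X. \<sigma> x = \<tau> x"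
  shows "\<sigma> = \<tau>"
proof
  fix x show "\<sigma> x = \<tau> x"
    using assms by (cases "x \<in> X") (auto simp: permutes_not_in)
qed

lemma wit_words:
  assumes p: "\<sigma> permutes {1..n}" and q: "\<tau> permutes {1..m}"
  shows "S_words \<tau> m (wit \<sigma> n) = (if (m, \<tau>) = (n, \<sigma>) then 1 else 0)"
proof -
  let ?w = "wit \<sigma> n"
  have len: "length ?w = n" by (simp add: wit_def)
  have wj: "?w ! (j - 1) = (inv_into {1..n} \<sigma> j, j)" if "j \<in> {1..n}" for j
    unfolding wit_def by (rule map_upt_nth[OF that])
  have lett: "?w \<in> lists letters"
  proof -
    have "set ?w \<subseteq> letters"
    proof
      fix x assume xw: "x \<in> set ?w"
      obtain j where j: "j \<in> {1..n}" and x: "x = (inv_into {1..n} \<sigma> j, j)"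
        using set_map_upt[of x "\<lambda>j. (inv_into {1..n} \<sigma> j, j)" n] xw unfolding wit_def by blast
      show "x \<in> letters" using perm_facts(1)[OF p j] j x by (auto simp: letters_def)
    qed
    then show ?thesis by auto
  qed
  show ?thesis
  proof (cases "m = n")
    case False
    then show ?thesis using len by (auto simp: S_words_def)
  next
    case True
    have "(\<forall>j\<in>{1..m}. prec (?w ! (j - 1)) (?w ! (\<tau> j - 1))) \<longleftrightarrow> \<tau> = \<sigma>"
    proof
      assume H: "\<forall>j\<in>{1..m}. prec (?w ! (j - 1)) (?w ! (\<tau> j - 1))"
      have "\<forall>x\<in>{1..n}. \<tau> x = \<sigma> x"
      proof
        fix j assume j: "j \<in> {1..n}"
        have tj: "\<tau> j \<in> {1..n}" using perm_facts(4)[OF q] j True by blast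
        have "prec (?w ! (j - 1)) (?w ! (\<tau> j - 1))" using H j True by blast
        then have "j = inv_into {1..n} \<sigma> (\<tau> j)" using wj[OF j] wj[OF tj] by (simp add: prec_def)
        then show "\<tau> j = \<sigma> j" using perm_facts(2)[OF p tj] by simp
      qed
      then show "\<tau> = \<sigma>" using permutes_ext[OF q[unfolded True] p] by blast
    next
      assume "\<tau> = \<sigma>"
      show "\<forall>j\<in>{1..m}. prec (?w ! (j - 1)) (?w ! (\<tau> j - 1))"
      proof
        fix j assume j: "j \<in> {1..m}"
        hence j': "j \<in> {1..n}" using True by simp
        have tj: "\<sigma> j \<in> {1..n}" using perm_facts(4)[OF p j'] .
        show "prec (?w ! (j - 1)) (?w ! (\<tau> j - 1))"
          using wj[OF j'] wj[OF tj] perm_facts(3)[OF p j'] \<open>\<tau> = \<sigma>\<close> by (simp add: prec_def)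
      qed
    qed
    then show ?thesis using True len lett unfolding S_words_def by auto
  qed
qed

lemma part2:
  fixes c :: "nat \<times> (nat \<Rightarrow> nat) \<Rightarrow> 'k::field"
  assumes F: "finite F" "F \<subseteq> {(n, \<sigma>). \<sigma> permutes {1..n}}"
    and z: "\<forall>w. (\<Sum>(n, \<sigma>)\<in>F. c (n, \<sigma>) * S \<sigma> n w) = 0"
  shows "\<forall>p\<in>F. c p = 0"
proof
  fix p assume pF: "p \<in> F"
  obtain n \<sigma> where pe: "p = (n, \<sigma>)" by (cases p)
  have ps: "\<sigma> permutes {1..n}" using pF pe F(2) by blast
  have "(\<Sum>(m, \<tau>)\<in>F. c (m, \<tau>) * S \<tau> m (wit \<sigma> n)) = (\<Sum>q\<in>F. if q = p then c q else 0)"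
  proof (rule sum.cong)
    fix q assume qF: "q \<in> F"
    obtain m \<tau> where qe: "q = (m, \<tau>)" by (cases q)
    have qs: "\<tau> permutes {1..m}" using qF qe F(2) by blast
    show "(case q of (m, \<tau>) \<Rightarrow> c (m, \<tau>) * S \<tau> m (wit \<sigma> n)) = (if q = p then c q else 0)"
    proof -
      have "(S \<tau> m (wit \<sigma> n) :: 'k) = S_words \<tau> m (wit \<sigma> n)" by (rule S_eq_words[OF qs])
      also have "\<dots> = (if q = p then 1 else 0)" using wit_words[OF ps qs] qe pe by simp
      finally show ?thesis using qe by simp
    qed
  qed simp
  also have "\<dots> = c p" using pF F(1) by simp
  finally show "c p = 0" using z by simp
qed



lemma shift_permutes:
  fixes \<tau> :: "nat \<Rightarrow> nat" and n m :: nat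
  assumes q: "\<tau> permutes {1..m}"
  shows "(\<lambda>i. if n < i \<and> i \<le> n + m then \<tau> (i - n) + n else i) permutes {1..n+m}"
proof -
  have im: "(\<lambda>x. x + n) ` {1..m} = {n+1..n+m}"
    using image_add_atLeastAtMost[of n 1 m] by (simp add: add.commute)
  have b: "bij_betw (\<lambda>x. x + n) {1..m} {n+1..n+m}"
    unfolding bij_betw_def using im by (auto simp: inj_on_def)
  have P: "(\<lambda>x. if x \<in> {n+1..n+m} then (\<tau> (inv_into {1..m} (\<lambda>x. x + n) x)) + n else x) permutes {n+1..n+m}"
    using permutes_bij_inv_into[OF q b] by simp
  have e: "(\<lambda>x. if x \<in> {n+1..n+m} then (\<tau> (inv_into {1..m} (\<lambda>x. x + n) x)) + n else x)
      = (\<lambda>i. if n < i \<and> i \<le> n + m then \<tau> (i - n) + n else i)"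
  proof
    fix x show "(if x \<in> {n+1..n+m} then (\<tau> (inv_into {1..m} (\<lambda>x. x + n) x)) + n else x)
      = (if n < x \<and> x \<le> n + m then \<tau> (x - n) + n else x)"
    proof (cases "n < x \<and> x \<le> n + m")
      case True
      have "inv_into {1..m} (\<lambda>x. x + n) ((x - n) + n) = x - n"
        by (rule inv_into_f_f) (use True in \<open>auto simp: inj_on_def\<close>)
      then show ?thesis using True by simp
    qed auto
  qed
  show ?thesis using permutes_subset[OF P[unfolded e]] by auto
qed

lemma shift_concat_permutes:
  assumes p: "\<sigma> permutes {1..n}" and q: "\<tau> permutes {1..m}"
  shows "shift_concat \<sigma> n \<tau> m permutes {1..n+m}"
proof -
  have eq: "shift_concat \<sigma> n \<tau> m = \<sigma> \<circ> (\<lambda>i. if n < i \<and> i \<le> n + m then \<tau> (i - n) + n else i)"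
  proof
    fix i show "shift_concat \<sigma> n \<tau> m i = (\<sigma> \<circ> (\<lambda>i. if n < i \<and> i \<le> n + m then \<tau> (i - n) + n else i)) i"
    proof (cases "n < i \<and> i \<le> n + m")
      case True
      then have "i - n \<in> {1..m}" by auto
      then have "\<tau> (i - n) \<in> {1..m}" using perm_facts(4)[OF q] by blast
      then have "\<tau> (i - n) + n \<notin> {1..n}" by auto
      then have "\<sigma> (\<tau> (i - n) + n) = \<tau> (i - n) + n" by (rule permutes_not_in[OF p])
      then show ?thesis using True by (simp add: shift_concat_def)
    next
      case False
      show ?thesis
      proof (cases "1 \<le> i \<and> i \<le> n")
        case True
        then show ?thesis by (simp add: shift_concat_def)
      next
        case F2: False
        then have "i \<notin> {1..n}" by simp
        then have "\<sigma> i = i" by (rule permutes_not_in[OF p])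
        then show ?thesis using False F2 unfolding shift_concat_def o_def by presburger
      qed
    qed
  qed
  have sp: "\<sigma> permutes {1..n+m}" by (rule permutes_subset[OF p]) auto
  show ?thesis unfolding eq by (rule permutes_compose[OF shift_permutes[OF q] sp])
qed

lemma words_concat:
  assumes p: "\<sigma> permutes {1..n}" and q: "\<tau> permutes {1..m}" and len: "length w = n + m"
  shows "(S_words (shift_concat \<sigma> n \<tau> m) (n + m) w :: 'k::comm_ring_1)
     = S_words \<sigma> n (take n w) * S_words \<tau> m (drop n w)"
proof -
  let ?sc = "shift_concat \<sigma> n \<tau> m"
  have L: "w \<in> lists letters \<longleftrightarrow> take n w \<in> lists letters \<and> drop n w \<in> lists letters"
    by (metis append_take_drop_id append_in_lists_conv)
  have C: "(\<forall>j\<in>{1..n+m}. prec (w ! (j - 1)) (w ! (?sc j - 1))) \<longleftrightarrow>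
    (\<forall>j\<in>{1..n}. prec (take n w ! (j - 1)) (take n w ! (\<sigma> j - 1))) \<and>
    (\<forall>j\<in>{1..m}. prec (drop n w ! (j - 1)) (drop n w ! (\<tau> j - 1)))"
  proof safe
    fix j assume H: "\<forall>j\<in>{1..n+m}. prec (w ! (j - 1)) (w ! (?sc j - 1))" and j: "j \<in> {1..n}"
    have "\<sigma> j \<in> {1..n}" using perm_facts(4)[OF p j] .
    moreover have "prec (w ! (j - 1)) (w ! (?sc j - 1))" using H j by auto
    moreover have "?sc j = \<sigma> j" using j by (auto simp: shift_concat_def)
    ultimately show "prec (take n w ! (j - 1)) (take n w ! (\<sigma> j - 1))"
      using j by auto
  next
    fix j assume H: "\<forall>j\<in>{1..n+m}. prec (w ! (j - 1)) (w ! (?sc j - 1))" and j: "j \<in> {1..m}"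
    have tj: "\<tau> j \<in> {1..m}" using perm_facts(4)[OF q j] .
    have "prec (w ! (j + n - 1)) (w ! (?sc (j + n) - 1))" using H j by auto
    moreover have "?sc (j + n) = \<tau> j + n" using j by (auto simp: shift_concat_def)
    ultimately show "prec (drop n w ! (j - 1)) (drop n w ! (\<tau> j - 1))"
      using j tj len by (simp add: add.commute)
  next
    fix j assume H1: "\<forall>j\<in>{1..n}. prec (take n w ! (j - 1)) (take n w ! (\<sigma> j - 1))"
      and H2: "\<forall>j\<in>{1..m}. prec (drop n w ! (j - 1)) (drop n w ! (\<tau> j - 1))"
      and j: "j \<in> {1..n+m}"
    show "prec (w ! (j - 1)) (w ! (?sc j - 1))"
    proof (cases "j \<le> n")
      case True
      then have j': "j \<in> {1..n}" using j by auto
      have sj: "\<sigma> j \<in> {1..n}" using perm_facts(4)[OF p j'] .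
      have "prec (take n w ! (j - 1)) (take n w ! (\<sigma> j - 1))" using H1 j' by blast
      moreover have "?sc j = \<sigma> j" using j' by (simp add: shift_concat_def)
      moreover have "j - 1 < n" "\<sigma> j - 1 < n" using sj j' by auto
      ultimately show ?thesis by simp
    next
      case False
      define k where "k = j - n"
      have k: "k \<in> {1..m}" "j = k + n" using False j by (auto simp: k_def)
      have tk: "\<tau> k \<in> {1..m}" using perm_facts(4)[OF q k(1)] .
      have "?sc j = \<tau> k + n" using k False by (auto simp: shift_concat_def)
      moreover have "prec (drop n w ! (k - 1)) (drop n w ! (\<tau> k - 1))" using H2 k(1) by blast
      ultimately show ?thesis using k tk len by (simp add: add.commute)
    qed
  qed
  show ?thesis unfolding S_words_def using L C len by auto
qed

lemma part3:
  assumes p: "\<sigma> permutes {1..n}" and q: "\<tau> permutes {1..m}"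
  shows "series_mult (S \<sigma> n) (S \<tau> m) = (S (shift_concat \<sigma> n \<tau> m) (n + m) :: letter list \<Rightarrow> 'k::comm_ring_1)"
proof
  fix w :: "letter list"
  have e1: "S \<sigma> n = (S_words \<sigma> n :: letter list \<Rightarrow> 'k)" using S_eq_words[OF p] by blast
  have e2: "S \<tau> m = (S_words \<tau> m :: letter list \<Rightarrow> 'k)" using S_eq_words[OF q] by blast
  have e3: "S (shift_concat \<sigma> n \<tau> m) (n + m) w = (S_words (shift_concat \<sigma> n \<tau> m) (n + m) w :: 'k)"
    using S_eq_words[OF shift_concat_permutes[OF p q]] by blast
  have "series_mult (S_words \<sigma> n) (S_words \<tau> m) w
      = (\<Sum>k\<in>{0..length w}. if k = n then S_words \<sigma> n (take n w) * S_words \<tau> m (drop n w) else (0::'k))"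
    unfolding series_mult_def
  proof (rule sum.cong)
    fix k assume "k \<in> {0..length w}"
    then have "length (take k w) = k" by simp
    then show "S_words \<sigma> n (take k w) * S_words \<tau> m (drop k w)
      = (if k = n then S_words \<sigma> n (take n w) * S_words \<tau> m (drop n w) else (0::'k))"
      by (auto simp: S_words_def)
  qed simp
  also have "\<dots> = (if n \<le> length w then S_words \<sigma> n (take n w) * S_words \<tau> m (drop n w) else 0)"
    by (simp add: sum.delta')
  also have "\<dots> = S_words (shift_concat \<sigma> n \<tau> m) (n + m) w"
  proof (cases "length w = n + m")
    case True
    have "(S_words (shift_concat \<sigma> n \<tau> m) (n + m) w :: 'k)
     = S_words \<sigma> n (take n w) * S_words \<tau> m (drop n w)" by (rule words_concat[OF p q True])
    then show ?thesis using True by simp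
  next
    case False
    then show ?thesis by (auto simp: S_words_def)
  qed
  finally show "series_mult (S \<sigma> n) (S \<tau> m) w = (S (shift_concat \<sigma> n \<tau> m) (n + m) w :: 'k)"
    using e1 e2 e3 by simp
qed



lemma rank_strict:
  assumes "finite U" "x \<in> U" "y \<in> U" "x < y"
  shows "rank U x < rank U y"
proof -
  have "{z \<in> U. z \<le> x} \<subseteq> {z \<in> U. z \<le> y}" using assms by auto
  moreover have "y \<in> {z \<in> U. z \<le> y}" "y \<notin> {z \<in> U. z \<le> x}" using assms by auto
  ultimately have "{z \<in> U. z \<le> x} \<subset> {z \<in> U. z \<le> y}" by blast
  then show ?thesis unfolding rank_def using assms(1) by (intro psubset_card_mono) auto
qed

lemma rank_inj: "finite U \<Longrightarrow> inj_on (rank U) U"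
  by (metis inj_onI linorder_neqE_nat rank_strict less_irrefl)

lemma rank_range: assumes "finite U" "x \<in> U" shows "rank U x \<in> {1..card U}"
proof -
  have "x \<in> {z \<in> U. z \<le> x}" using assms by auto
  then have "1 \<le> rank U x" unfolding rank_def using assms(1)
    by (metis (no_types, lifting) One_nat_def Suc_leI card_gt_0_iff empty_iff finite_subset mem_Collect_eq subsetI)
  moreover have "rank U x \<le> card U" unfolding rank_def using assms(1) by (intro card_mono) auto
  ultimately show ?thesis by simp
qed

lemma rank_bij: assumes "finite U" shows "bij_betw (rank U) U {1..card U}"
proof -
  have "rank U ` U \<subseteq> {1..card U}" using rank_range[OF assms] by blast
  moreover have "card (rank U ` U) = card {1..card U}"
    using card_image[OF rank_inj[OF assms]] by simp
  ultimately have "rank U ` U = {1..card U}" by (intro card_subset_eq) auto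
  then show ?thesis using rank_inj[OF assms] unfolding bij_betw_def by blast
qed

definition stable :: "(nat \<Rightarrow> nat) \<Rightarrow> nat set \<Rightarrow> bool" where
  "stable \<sigma> U \<longleftrightarrow> (\<forall>j\<in>U. \<sigma> j \<in> U)"

lemma stable_bij:
  assumes p: "\<sigma> permutes {1..n}" and U: "U \<subseteq> {1..n}" and st: "stable \<sigma> U"
  shows "bij_betw \<sigma> U U"
proof -
  have fin: "finite U" using U finite_subset by blast
  have inj: "inj_on \<sigma> U" using permutes_inj[OF p] by (auto simp: inj_on_def inj_def)
  have "\<sigma> ` U \<subseteq> U" using st by (auto simp: stable_def)
  moreover have "card (\<sigma> ` U) = card U" using card_image[OF inj] .
  ultimately have "\<sigma> ` U = U" using fin by (intro card_subset_eq) auto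
  then show ?thesis using inj unfolding bij_betw_def by blast
qed

lemma stable_compl:
  assumes p: "\<sigma> permutes {1..n}" and U: "U \<subseteq> {1..n}" and st: "stable \<sigma> U"
  shows "stable \<sigma> ({1..n} - U)"
proof -
  have im: "\<sigma> ` U = U" using stable_bij[OF assms] by (simp add: bij_betw_def)
  show ?thesis unfolding stable_def
  proof
    fix j assume j: "j \<in> {1..n} - U"
    have "\<sigma> j \<in> {1..n}" using perm_facts(4)[OF p] j by blast
    moreover have "\<sigma> j \<notin> U"
    proof
      assume "\<sigma> j \<in> U"
      then obtain k where k: "k \<in> U" "\<sigma> k = \<sigma> j" using im by (metis imageE)
      then have "k = j" using permutes_inj[OF p] by (auto simp: inj_def)
      then show False using k j by simp
    qed
    ultimately show "\<sigma> j \<in> {1..n} - U" by simp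
  qed
qed

lemma std_props:
  assumes p: "\<sigma> permutes {1..n}" and U: "U \<subseteq> {1..n}" and st: "stable \<sigma> U"
  shows "std \<sigma> U permutes {1..card U}" and "\<And>j. j \<in> U \<Longrightarrow> std \<sigma> U (rank U j) = rank U (\<sigma> j)"
proof -
  have fin: "finite U" using U finite_subset by blast
  have b: "bij_betw \<sigma> U U" by (rule stable_bij[OF assms])
  define q where "q = (\<lambda>x. if x \<in> U then \<sigma> x else x)"
  have bq: "bij_betw q U U" using b by (subst bij_betw_cong[where g=\<sigma>]) (auto simp: q_def)
  have qp: "q permutes U" by (rule bij_imp_permutes[OF bq]) (simp add: q_def)
  have rb: "bij_betw (rank U) U {1..card U}" by (rule rank_bij[OF fin])
  have P: "(\<lambda>x. if x \<in> {1..card U} then rank U (q (inv_into U (rank U) x)) else x) permutes {1..card U}"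
    by (rule permutes_bij_inv_into[OF qp rb])
  have e: "(\<lambda>x. if x \<in> {1..card U} then rank U (q (inv_into U (rank U) x)) else x) = std \<sigma> U"
  proof
    fix x show "(if x \<in> {1..card U} then rank U (q (inv_into U (rank U) x)) else x) = std \<sigma> U x"
    proof (cases "x \<in> {1..card U}")
      case True
      define y where "y = inv_into U (rank U) x"
      have y: "y \<in> U" "rank U y = x" using True rb unfolding y_def
        by (metis bij_betw_def inv_into_into, metis bij_betw_inv_into_right)
      have "the_inv_into U (rank U) x = y"
        using the_inv_into_f_f[OF rank_inj[OF fin] y(1)] y(2) by simp
      then show ?thesis using True y by (simp add: std_def q_def y_def[symmetric])
    next
      case False
      show ?thesis unfolding std_def by (simp only: if_not_P[OF False])
    qed
  qed
  show "std \<sigma> U permutes {1..card U}" using P unfolding e .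
  fix j assume j: "j \<in> U"
  have "rank U j \<in> {1..card U}" by (rule rank_range[OF fin j])
  moreover have "the_inv_into U (rank U) (rank U j) = j"
    by (rule the_inv_into_f_f[OF rank_inj[OF fin] j])
  ultimately show "std \<sigma> U (rank U j) = rank U (\<sigma> j)" by (simp add: std_def)
qed



lemma filter_nth_card:
  "k < length xs \<Longrightarrow> P (xs ! k) \<Longrightarrow> filter P xs ! card {i. i < k \<and> P (xs ! i)} = xs ! k"
proof (induction xs arbitrary: k)
  case Nil then show ?case by simp
next
  case (Cons x xs)
  show ?case
  proof (cases k)
    case 0
    then show ?thesis using Cons.prems by simp
  next
    case (Suc k')
    have k': "k' < length xs" "P (xs ! k')" using Cons.prems Suc by auto
    have IH: "filter P xs ! card {i. i < k' \<and> P (xs ! i)} = xs ! k'" by (rule Cons.IH[OF k'])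
    have e: "{k. Suc k \<in> {i. P ((x # xs) ! i)} \<and> k < k'} = {i. i < k' \<and> P (xs ! i)}" by auto
    show ?thesis
    proof (cases "P x")
      case True
      have "card {i. i < k \<and> P ((x # xs) ! i)} = card {i \<in> {i. P ((x # xs) ! i)}. i < Suc k'}"
        using Suc by (intro arg_cong[where f=card]) auto
      also have "\<dots> = Suc (card {i. i < k' \<and> P (xs ! i)})"
        using card_less_Suc[of "{i. P ((x # xs) ! i)}" k'] True e by simp
      finally show ?thesis using True IH Suc by simp
    next
      case False
      have "card {i. i < k \<and> P ((x # xs) ! i)} = card {i \<in> {i. P ((x # xs) ! i)}. i < Suc k'}"
        using Suc by (intro arg_cong[where f=card]) auto
      also have "\<dots> = card {i. i < k' \<and> P (xs ! i)}"
        using card_less_Suc2[of "{i. P ((x # xs) ! i)}" k'] False e by simp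
      finally show ?thesis using False IH Suc by simp
    qed
  qed
qed

definition posn :: "('a \<Rightarrow> bool) \<Rightarrow> 'a list \<Rightarrow> nat set" where
  "posn P xs = {j \<in> {1..length xs}. P (xs ! (j - 1))}"

lemma posn_rank:
  assumes j: "j \<in> posn P xs"
  shows "rank (posn P xs) j = Suc (card {i. i < j - 1 \<and> P (xs ! i)})"
proof -
  have j1: "1 \<le> j" "j \<le> length xs" "P (xs ! (j - 1))" using j by (auto simp: posn_def)
  have "{y \<in> posn P xs. y \<le> j} = insert j (Suc ` {i. i < j - 1 \<and> P (xs ! i)})"
  proof (intro set_eqI iffI)
    fix y assume y: "y \<in> {y \<in> posn P xs. y \<le> j}"
    show "y \<in> insert j (Suc ` {i. i < j - 1 \<and> P (xs ! i)})"
    proof (cases "y = j")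
      case False
      then have "y - 1 < j - 1" "P (xs ! (y - 1))" "y = Suc (y - 1)" using y j1 by (auto simp: posn_def)
      then show ?thesis by blast
    qed simp
  next
    fix y assume "y \<in> insert j (Suc ` {i. i < j - 1 \<and> P (xs ! i)})"
    then show "y \<in> {y \<in> posn P xs. y \<le> j}" using j1 j by (auto simp: posn_def)
  qed
  moreover have "j \<notin> Suc ` {i. i < j - 1 \<and> P (xs ! i)}" by auto
  moreover have "finite {i. i < j - 1 \<and> P (xs ! i)}" by simp
  ultimately show ?thesis unfolding rank_def by (simp add: card_image)
qed

lemma posn_filter_nth:
  assumes j: "j \<in> posn P xs"
  shows "filter P xs ! (rank (posn P xs) j - 1) = xs ! (j - 1)"
  using filter_nth_card[of "j - 1" xs P] j posn_rank[OF j] by (auto simp: posn_def)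

lemma posn_card: "card (posn P xs) = length (filter P xs)"
proof -
  have "posn P xs = Suc ` {i. i < length xs \<and> P (xs ! i)}"
  proof (intro set_eqI iffI)
    fix y assume "y \<in> posn P xs"
    then have "y - 1 < length xs" "P (xs ! (y - 1))" "y = Suc (y - 1)" by (auto simp: posn_def)
    then show "y \<in> Suc ` {i. i < length xs \<and> P (xs ! i)}" by blast
  qed (auto simp: posn_def)
  then show ?thesis by (simp add: card_image length_filter_conv_card)
qed

lemma posn_sub: "posn P xs \<subseteq> {1..length xs}" by (auto simp: posn_def)



lemma goodK:
  assumes p: "\<sigma> permutes {1..n}" and U: "U \<subseteq> {1..n}" and st: "stable \<sigma> U"
  shows "S_words (std \<sigma> U) (card U) u = (if u \<in> lists letters \<and> length u = card U \<and>
     (\<forall>j\<in>U. prec (u ! (rank U j - 1)) (u ! (rank U (\<sigma> j) - 1))) then 1 else 0)"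
proof -
  have fin: "finite U" using U finite_subset by blast
  have im: "rank U ` U = {1..card U}" using rank_bij[OF fin] by (simp add: bij_betw_def)
  have "(\<forall>k\<in>{1..card U}. prec (u ! (k - 1)) (u ! (std \<sigma> U k - 1))) \<longleftrightarrow>
     (\<forall>j\<in>U. prec (u ! (rank U j - 1)) (u ! (rank U (\<sigma> j) - 1)))"
    unfolding im[symmetric] using std_props(2)[OF p U st] by auto
  then show ?thesis unfolding S_words_def by simp
qed

lemma lists_proj:
  "w \<in> lists (Inl ` letters \<union> Inr ` letters) \<longleftrightarrow> projA w \<in> lists letters \<and> projB w \<in> lists letters"
proof (induction w)
  case Nil then show ?case by (simp add: projA_def projB_def)
next
  case (Cons x w)
  then show ?case by (cases x) (auto simp: projA_def projB_def)
qed

lemma posn_compl: "posn isl w = {1..length w} - posn (\<lambda>x. \<not> isl x) w"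
  by (auto simp: posn_def)

lemma projA_nth:
  assumes j: "j \<in> posn isl w"
  shows "projA w ! (rank (posn isl w) j - 1) = projl (w ! (j - 1))"
proof -
  have fin: "finite (posn isl w)" using posn_sub finite_subset by blast
  have "rank (posn isl w) j \<in> {1..card (posn isl w)}" by (rule rank_range[OF fin j])
  then have "rank (posn isl w) j - 1 < length (filter isl w)" using posn_card[of isl w] by auto
  then show ?thesis unfolding projA_def using posn_filter_nth[OF j] by simp
qed

lemma projB_nth:
  assumes j: "j \<in> posn (\<lambda>x. \<not> isl x) w"
  shows "projB w ! (rank (posn (\<lambda>x. \<not> isl x) w) j - 1) = projr (w ! (j - 1))"
proof -
  have fin: "finite (posn (\<lambda>x. \<not> isl x) w)" using posn_sub finite_subset by blast
  have "rank (posn (\<lambda>x. \<not> isl x) w) j \<in> {1..card (posn (\<lambda>x. \<not> isl x) w)}" by (rule rank_range[OF fin j])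
  then have "rank (posn (\<lambda>x. \<not> isl x) w) j - 1 < length (filter (\<lambda>x. \<not> isl x) w)"
    using posn_card[of "\<lambda>x. \<not> isl x" w] by auto
  then show ?thesis unfolding projB_def using posn_filter_nth[OF j] by simp
qed

lemma valid_stable:
  assumes p: "\<sigma> permutes {1..n}" and v: "S_AB \<sigma> n w \<noteq> 0"
  shows "length w = n" "stable \<sigma> (posn (\<lambda>x. \<not> isl x) w)"
proof -
  have V: "length w = n" "\<forall>j\<in>{1..n}. precAB (w ! (j - 1)) (w ! (\<sigma> j - 1))"
    using v unfolding S_AB_def by (auto split: if_splits)
  show "length w = n" by (rule V(1))
  show "stable \<sigma> (posn (\<lambda>x. \<not> isl x) w)" unfolding stable_def
  proof
    fix j assume j: "j \<in> posn (\<lambda>x. \<not> isl x) w"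
    then have j1: "j \<in> {1..n}" "\<not> isl (w ! (j - 1))" using V(1) by (auto simp: posn_def)
    have sj: "\<sigma> j \<in> {1..n}" using perm_facts(4)[OF p j1(1)] .
    have pr: "precAB (w ! (j - 1)) (w ! (\<sigma> j - 1))" using V(2) j1(1) by blast
    have "\<not> isl (w ! (\<sigma> j - 1))"
    proof
      assume "isl (w ! (\<sigma> j - 1))"
      then show False using pr j1(2)
        by (cases "w ! (j - 1)"; cases "w ! (\<sigma> j - 1)") auto
    qed
    then show "\<sigma> j \<in> posn (\<lambda>x. \<not> isl x) w" using sj V(1) by (auto simp: posn_def)
  qed
qed

lemma valid_split:
  assumes p: "\<sigma> permutes {1..n}" and len: "length w = n"
    and st: "stable \<sigma> (posn (\<lambda>x. \<not> isl x) w)"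
  shows "(S_AB \<sigma> n w :: 'k::comm_ring_1) =
    S_words (std \<sigma> (posn isl w)) (card (posn isl w)) (projA w) *
    S_words (std \<sigma> (posn (\<lambda>x. \<not> isl x) w)) (card (posn (\<lambda>x. \<not> isl x) w)) (projB w)"
proof -
  let ?A = "posn isl w" and ?B = "posn (\<lambda>x. \<not> isl x) w"
  have Bsub: "?B \<subseteq> {1..n}" using posn_sub len by blast
  have Asub: "?A \<subseteq> {1..n}" using posn_sub len by blast
  have Aeq: "?A = {1..n} - ?B" using posn_compl[of w] len by simp
  have stA: "stable \<sigma> ?A" unfolding Aeq by (rule stable_compl[OF p Bsub st])
  have lA: "length (projA w) = card ?A" using posn_card[of isl w] by (simp add: projA_def)
  have lB: "length (projB w) = card ?B" using posn_card[of "\<lambda>x. \<not> isl x" w] by (simp add: projB_def)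
  have PA: "(\<forall>j\<in>?A. prec (projA w ! (rank ?A j - 1)) (projA w ! (rank ?A (\<sigma> j) - 1))) \<longleftrightarrow>
      (\<forall>j\<in>?A. precAB (w ! (j - 1)) (w ! (\<sigma> j - 1)))"
  proof -
    have "prec (projA w ! (rank ?A j - 1)) (projA w ! (rank ?A (\<sigma> j) - 1)) \<longleftrightarrow>
      precAB (w ! (j - 1)) (w ! (\<sigma> j - 1))" if j: "j \<in> ?A" for j
    proof -
      have sj: "\<sigma> j \<in> ?A" using stA j by (auto simp: stable_def)
      have i1: "isl (w ! (j - 1))" "isl (w ! (\<sigma> j - 1))" using j sj by (auto simp: posn_def)
      show ?thesis using projA_nth[OF j] projA_nth[OF sj] i1
        by (cases "w ! (j - 1)"; cases "w ! (\<sigma> j - 1)") auto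
    qed
    then show ?thesis by blast
  qed
  have PB: "(\<forall>j\<in>?B. prec (projB w ! (rank ?B j - 1)) (projB w ! (rank ?B (\<sigma> j) - 1))) \<longleftrightarrow>
      (\<forall>j\<in>?B. precAB (w ! (j - 1)) (w ! (\<sigma> j - 1)))"
  proof -
    have "prec (projB w ! (rank ?B j - 1)) (projB w ! (rank ?B (\<sigma> j) - 1)) \<longleftrightarrow>
      precAB (w ! (j - 1)) (w ! (\<sigma> j - 1))" if j: "j \<in> ?B" for j
    proof -
      have sj: "\<sigma> j \<in> ?B" using st j by (auto simp: stable_def)
      have i1: "\<not> isl (w ! (j - 1))" "\<not> isl (w ! (\<sigma> j - 1))" using j sj by (auto simp: posn_def)
      show ?thesis using projB_nth[OF j] projB_nth[OF sj] i1
        by (cases "w ! (j - 1)"; cases "w ! (\<sigma> j - 1)") auto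
    qed
    then show ?thesis by blast
  qed
  have U: "{1..n} = ?A \<union> ?B" using Aeq Bsub by blast
  have "(\<forall>j\<in>{1..n}. precAB (w ! (j - 1)) (w ! (\<sigma> j - 1))) \<longleftrightarrow>
     (\<forall>j\<in>?A. precAB (w ! (j - 1)) (w ! (\<sigma> j - 1))) \<and> (\<forall>j\<in>?B. precAB (w ! (j - 1)) (w ! (\<sigma> j - 1)))"
    using U by blast
  then show ?thesis
    unfolding S_AB_def goodK[OF p Asub stA] goodK[OF p Bsub st]
    using lA lB PA PB lists_proj[of w] len by auto
qed



lemma orbit_of_eq:
  assumes p: "\<sigma> permutes {1..n}"
  shows "orbit_of \<sigma> x = orbit \<sigma> x"
proof -
  have "permutation \<sigma>" using p by (intro permutes_imp_permutation) auto
  then show ?thesis unfolding orbit_of_def by (simp add: orbit_altdef_permutation)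
qed

lemma orbit_same:
  assumes p: "\<sigma> permutes {1..n}" and y: "y \<in> orbit_of \<sigma> x"
  shows "orbit_of \<sigma> y = orbit_of \<sigma> x"
proof -
  have pm: "permutation \<sigma>" using p by (intro permutes_imp_permutation) auto
  have y': "y \<in> orbit \<sigma> x" using y orbit_of_eq[OF p] by simp
  have xx: "x \<in> orbit \<sigma> x" by (rule permutation_self_in_orbit[OF pm])
  have xy: "x \<in> orbit \<sigma> y" by (rule orbit_swap[OF xx y'])
  have "orbit \<sigma> y = orbit \<sigma> x"
    using orbit_trans[OF _ y'] orbit_trans[OF _ xy] by blast
  then show ?thesis using orbit_of_eq[OF p] by simp
qed

lemma self_in_orbit_of: "x \<in> orbit_of \<sigma> x"
  unfolding orbit_of_def by (metis (mono_tags, lifting) funpow_0 mem_Collect_eq)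

lemma orbit_of_sub:
  assumes p: "\<sigma> permutes {1..n}" and x: "x \<in> {1..n}"
  shows "orbit_of \<sigma> x \<subseteq> {1..n}"
  using permutes_in_funpow_image[OF p x] unfolding orbit_of_def by blast

lemma orbit_of_stable: "stable \<sigma> (orbit_of \<sigma> x)"
  unfolding stable_def orbit_of_def
proof
  fix j assume "j \<in> {(\<sigma> ^^ k) x |k. True}"
  then obtain k where "j = (\<sigma> ^^ k) x" by blast
  then have "\<sigma> j = (\<sigma> ^^ Suc k) x" by simp
  then show "\<sigma> j \<in> {(\<sigma> ^^ k) x |k. True}" by blast
qed

lemma orbit_of_in_stable:
  assumes st: "stable \<sigma> U" and x: "x \<in> U"
  shows "orbit_of \<sigma> x \<subseteq> U"
proof
  fix j assume "j \<in> orbit_of \<sigma> x"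
  then obtain k where j: "j = (\<sigma> ^^ k) x" unfolding orbit_of_def by blast
  have "(\<sigma> ^^ k) x \<in> U" by (induction k) (use x st in \<open>auto simp: stable_def\<close>)
  then show "j \<in> U" using j by simp
qed

lemma cycles_sub: "\<sigma> permutes {1..n} \<Longrightarrow> C \<subseteq> cycles \<sigma> n \<Longrightarrow> \<Union>C \<subseteq> {1..n}"
  unfolding cycles_def using orbit_of_sub by blast

lemma cycles_stable: "C \<subseteq> cycles \<sigma> n \<Longrightarrow> stable \<sigma> (\<Union>C)"
  unfolding cycles_def stable_def using orbit_of_stable[unfolded stable_def] by blast

lemma cycles_disj:
  assumes p: "\<sigma> permutes {1..n}" and c1: "c1 \<in> cycles \<sigma> n" and c2: "c2 \<in> cycles \<sigma> n"
    and y: "y \<in> c1" "y \<in> c2"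
  shows "c1 = c2"
proof -
  obtain x1 where x1: "c1 = orbit_of \<sigma> x1" using c1 unfolding cycles_def by blast
  obtain x2 where x2: "c2 = orbit_of \<sigma> x2" using c2 unfolding cycles_def by blast
  show ?thesis using orbit_same[OF p, of y x1] orbit_same[OF p, of y x2] x1 x2 y by simp
qed

lemma cycles_nonempty: "c \<in> cycles \<sigma> n \<Longrightarrow> c \<noteq> {}"
  unfolding cycles_def using self_in_orbit_of by blast

lemma cycles_Union_inj:
  assumes p: "\<sigma> permutes {1..n}"
  shows "inj_on Union (Pow (cycles \<sigma> n))"
proof (rule inj_onI)
  fix C1 C2 assume C1: "C1 \<in> Pow (cycles \<sigma> n)" and C2: "C2 \<in> Pow (cycles \<sigma> n)" and e: "\<Union>C1 = \<Union>C2"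
  have *: "C \<subseteq> D" if C: "C \<subseteq> cycles \<sigma> n" and D: "D \<subseteq> cycles \<sigma> n" and e: "\<Union>C = \<Union>D" for C D
  proof
    fix c assume c: "c \<in> C"
    obtain x where x: "x \<in> c" using cycles_nonempty C c by blast
    then obtain d where d: "d \<in> D" "x \<in> d" using e c by blast
    have "c = d" using cycles_disj[OF p, of c d x] C D c d x by blast
    then show "c \<in> D" using d by simp
  qed
  show "C1 = C2" using *[of C1 C2] *[of C2 C1] C1 C2 e by auto
qed

lemma stable_Union_cycles:
  assumes st: "stable \<sigma> U" and U: "U \<subseteq> {1..n}"
  shows "\<Union>{c \<in> cycles \<sigma> n. c \<subseteq> U} = U"
proof
  show "\<Union>{c \<in> cycles \<sigma> n. c \<subseteq> U} \<subseteq> U" by blast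
  show "U \<subseteq> \<Union>{c \<in> cycles \<sigma> n. c \<subseteq> U}"
  proof
    fix x assume x: "x \<in> U"
    have "orbit_of \<sigma> x \<in> cycles \<sigma> n" using x U unfolding cycles_def by blast
    moreover have "orbit_of \<sigma> x \<subseteq> U" by (rule orbit_of_in_stable[OF st x])
    ultimately show "x \<in> \<Union>{c \<in> cycles \<sigma> n. c \<subseteq> U}" using self_in_orbit_of[of x \<sigma>] by blast
  qed
qed



lemma exists_word:
  "length u = length (filter id ps) \<Longrightarrow> length v = length (filter Not ps) \<Longrightarrow>
   \<exists>w. map isl w = ps \<and> projA w = u \<and> projB w = v"
proof (induction ps arbitrary: u v)
  case Nil then show ?case by (simp add: projA_def projB_def)
next
  case (Cons b ps)
  show ?case
  proof (cases b)
    case True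
    then obtain a u' where u: "u = a # u'" "length u' = length (filter id ps)"
      using Cons.prems by (cases u) (auto simp: id_def)
    obtain w where w: "map isl w = ps" "projA w = u'" "projB w = v"
      using Cons.IH[OF u(2)] Cons.prems True by auto
    show ?thesis using w u True by (intro exI[of _ "Inl a # w"]) (auto simp: projA_def projB_def)
  next
    case False
    then obtain a v' where v: "v = a # v'" "length v' = length (filter Not ps)"
      using Cons.prems by (cases v) auto
    obtain w where w: "map isl w = ps" "projA w = u" "projB w = v'"
      using Cons.IH[OF _ v(2)] Cons.prems False by auto
    show ?thesis using w v False by (intro exI[of _ "Inr a # w"]) (auto simp: projA_def projB_def)
  qed
qed

lemma word_inj:
  "map isl w1 = map isl w2 \<Longrightarrow> projA w1 = projA w2 \<Longrightarrow> projB w1 = projB w2 \<Longrightarrow> w1 = w2"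
proof (induction w1 arbitrary: w2)
  case Nil then show ?case by simp
next
  case (Cons x w1)
  then obtain y w2' where w2: "w2 = y # w2'" by (cases w2) auto
  show ?case using Cons.prems Cons.IH[of w2'] unfolding w2
    by (cases x; cases y) (auto simp: projA_def projB_def)
qed

lemma word_set_finite: "finite {w. projA w = u \<and> projB w = v}"
proof (rule finite_subset)
  show "{w. projA w = u \<and> projB w = v} \<subseteq>
    {w. set w \<subseteq> Inl ` set u \<union> Inr ` set v \<and> length w = length u + length v}"
  proof
    fix w :: "(letter + letter) list" assume "w \<in> {w. projA w = u \<and> projB w = v}"
    hence w: "projA w = u" "projB w = v" by auto
    have "set w \<subseteq> Inl ` set u \<union> Inr ` set v"
    proof
      fix x assume xw: "x \<in> set w"
      show "x \<in> Inl ` set u \<union> Inr ` set v"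
      proof (cases x)
        case (Inl a)
        then have "a \<in> set (projA w)" using xw unfolding projA_def by force
        then show ?thesis using Inl w by simp
      next
        case (Inr a)
        then have "a \<in> set (projB w)" using xw unfolding projB_def by force
        then show ?thesis using Inr w by simp
      qed
    qed
    moreover have "length w = length u + length v" using w
      by (auto simp: projA_def projB_def sum_length_filter_compl)
    ultimately show "w \<in> {w. set w \<subseteq> Inl ` set u \<union> Inr ` set v \<and> length w = length u + length v}" by simp
  qed
  show "finite {w. set w \<subseteq> Inl ` set u \<union> Inr ` set v \<and> length w = length u + length v}"
    by (rule finite_lists_length_eq) simp
qed

lemma sum_01_card:
  assumes "finite A" "\<forall>x\<in>A. f x = 0 \<or> f x = (1::'k::comm_ring_1)"
  shows "sum f A = of_nat (card {x\<in>A. f x \<noteq> 0})"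
proof -
  have "sum f A = sum f {x\<in>A. f x \<noteq> 0}"
    using assms(1) by (intro sum.mono_neutral_right) auto
  also have "\<dots> = sum (\<lambda>_. 1) {x\<in>A. f x \<noteq> 0}" using assms(2) by (intro sum.cong) auto
  finally show ?thesis by simp
qed



lemma S_words_01: "S_words \<sigma> n w = 0 \<or> S_words \<sigma> n w = 1"
  by (simp add: S_words_def)

lemma S_words_nz: "S_words \<sigma> n w \<noteq> 0 \<Longrightarrow> length w = n"
  by (simp add: S_words_def split: if_splits)

lemma part4:
  assumes p: "\<sigma> permutes {1..n}"
  shows "commute_image (S_AB \<sigma> n) u v =
        (\<Sum>C\<in>Pow (cycles \<sigma> n).
           (S (std \<sigma> ({1..n} - \<Union>C)) (card ({1..n} - \<Union>C)) u :: 'k::comm_ring_1) *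
           S (std \<sigma> (\<Union>C)) (card (\<Union>C)) v)"
proof -
  define W where "W = {w. projA w = u \<and> projB w = v}"
  define T where "T = (\<lambda>C. (S (std \<sigma> ({1..n} - \<Union>C)) (card ({1..n} - \<Union>C)) u :: 'k) *
           S (std \<sigma> (\<Union>C)) (card (\<Union>C)) v)"
  define Bp where "Bp = (\<lambda>w :: (letter + letter) list. posn (\<lambda>x. \<not> isl x) w)"
  define V where "V = {w\<in>W. (S_AB \<sigma> n w :: 'k) \<noteq> 0}"
  define G where "G = {C\<in>Pow (cycles \<sigma> n). T C \<noteq> 0}"
  have finW: "finite W" unfolding W_def by (rule word_set_finite)
  have cyc_img: "cycles \<sigma> n = orbit_of \<sigma> ` {1..n}" by (auto simp: cycles_def)
  have finP: "finite (Pow (cycles \<sigma> n))" unfolding cyc_img by simp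
  have TC: "T C = S_words (std \<sigma> ({1..n} - \<Union>C)) (card ({1..n} - \<Union>C)) u *
      S_words (std \<sigma> (\<Union>C)) (card (\<Union>C)) v" if C: "C \<in> Pow (cycles \<sigma> n)" for C
  proof -
    have Us: "\<Union>C \<subseteq> {1..n}" using cycles_sub[OF p] C by blast
    have Ust: "stable \<sigma> (\<Union>C)" using cycles_stable C by blast
    have Ucs: "{1..n} - \<Union>C \<subseteq> {1..n}" by blast
    have Ucst: "stable \<sigma> ({1..n} - \<Union>C)" by (rule stable_compl[OF p Us Ust])
    have e1: "(S (std \<sigma> ({1..n} - \<Union>C)) (card ({1..n} - \<Union>C)) u :: 'k)
      = S_words (std \<sigma> ({1..n} - \<Union>C)) (card ({1..n} - \<Union>C)) u"
      by (rule S_eq_words[OF std_props(1)[OF p Ucs Ucst]])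
    have e2: "(S (std \<sigma> (\<Union>C)) (card (\<Union>C)) v :: 'k) = S_words (std \<sigma> (\<Union>C)) (card (\<Union>C)) v"
      by (rule S_eq_words[OF std_props(1)[OF p Us Ust]])
    show ?thesis unfolding T_def e1 e2 ..
  qed
  have L: "commute_image (S_AB \<sigma> n) u v = (of_nat (card V) :: 'k)"
  proof -
    have "commute_image (S_AB \<sigma> n) u v = (sum (S_AB \<sigma> n) W :: 'k)"
      unfolding commute_image_def W_def ..
    also have "\<dots> = of_nat (card V)" unfolding V_def
      by (rule sum_01_card[OF finW]) (simp add: S_AB_def)
    finally show ?thesis .
  qed
  have R: "sum T (Pow (cycles \<sigma> n)) = of_nat (card G)" unfolding G_def
  proof (rule sum_01_card[OF finP])
    show "\<forall>C\<in>Pow (cycles \<sigma> n). T C = 0 \<or> T C = 1"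
    proof
      fix C assume C: "C \<in> Pow (cycles \<sigma> n)"
      have a: "(S_words (std \<sigma> ({1..n} - \<Union>C)) (card ({1..n} - \<Union>C)) u :: 'k) = 0 \<or>
        (S_words (std \<sigma> ({1..n} - \<Union>C)) (card ({1..n} - \<Union>C)) u :: 'k) = 1" by (rule S_words_01)
      have b: "(S_words (std \<sigma> (\<Union>C)) (card (\<Union>C)) v :: 'k) = 0 \<or>
        (S_words (std \<sigma> (\<Union>C)) (card (\<Union>C)) v :: 'k) = 1" by (rule S_words_01)
      show "T C = 0 \<or> T C = 1" unfolding TC[OF C] using a b by auto
    qed
  qed
  have Vprops: "length w = n \<and> stable \<sigma> (Bp w)" if w: "w \<in> V" for w
    using valid_stable[OF p, of w] w unfolding V_def Bp_def by auto
  have injB: "inj_on Bp V"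
  proof (rule inj_onI)
    fix w1 w2 assume w1: "w1 \<in> V" and w2: "w2 \<in> V" and e: "Bp w1 = Bp w2"
    have l: "length w1 = n" "length w2 = n" using Vprops w1 w2 by auto
    have isl_iff: "isl (w ! k) \<longleftrightarrow> Suc k \<notin> Bp w" if "k < length w" for w k
      using that unfolding Bp_def posn_def by auto
    have "map isl w1 = map isl w2"
    proof (rule nth_equalityI)
      show "length (map isl w1) = length (map isl w2)" using l by simp
      fix k assume "k < length (map isl w1)"
      then have k: "k < length w1" "k < length w2" using l by auto
      show "map isl w1 ! k = map isl w2 ! k" using isl_iff[OF k(1)] isl_iff[OF k(2)] e k by simp
    qed
    moreover have "projA w1 = projA w2" "projB w1 = projB w2" using w1 w2 unfolding V_def W_def by auto
    ultimately show "w1 = w2" by (rule word_inj)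
  qed
  have injU: "inj_on Union G" using cycles_Union_inj[OF p] unfolding G_def
    by (rule inj_on_subset) blast
  have imgs: "Bp ` V = Union ` G"
  proof
    show "Bp ` V \<subseteq> Union ` G"
    proof
      fix U assume "U \<in> Bp ` V"
      then obtain w where w: "w \<in> V" "U = Bp w" by blast
      have l: "length w = n" and st: "stable \<sigma> (Bp w)" using Vprops[OF w(1)] by auto
      have Bs: "Bp w \<subseteq> {1..n}" using posn_sub l unfolding Bp_def by blast
      define C where "C = {c \<in> cycles \<sigma> n. c \<subseteq> Bp w}"
      have CU: "\<Union>C = Bp w" unfolding C_def by (rule stable_Union_cycles[OF st Bs])
      have CP: "C \<in> Pow (cycles \<sigma> n)" unfolding C_def by blast
      have Ac: "{1..n} - \<Union>C = posn isl w" using posn_compl[of w] l CU unfolding Bp_def by simp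
      have uv: "projA w = u" "projB w = v" using w(1) unfolding V_def W_def by auto
      have "T C = S_AB \<sigma> n w"
        unfolding TC[OF CP] CU Bp_def valid_split[OF p l st[unfolded Bp_def]] uv
        using posn_compl[of w] l by simp
      then have "T C \<noteq> 0" using w(1) unfolding V_def by simp
      then have "C \<in> G" using CP unfolding G_def by blast
      then show "U \<in> Union ` G" using CU w(2) by blast
    qed
  next
    show "Union ` G \<subseteq> Bp ` V"
    proof
      fix U assume "U \<in> Union ` G"
      then obtain C where C: "C \<in> G" "U = \<Union>C" by blast
      have CP: "C \<in> Pow (cycles \<sigma> n)" and TC0: "T C \<noteq> 0" using C(1) unfolding G_def by auto
      have Us: "U \<subseteq> {1..n}" using cycles_sub[OF p] CP C(2) by blast
      have Ust: "stable \<sigma> U" using cycles_stable CP C(2) by blast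
      have S1: "S_words (std \<sigma> ({1..n} - U)) (card ({1..n} - U)) u \<noteq> (0::'k)"
        and S2: "S_words (std \<sigma> U) (card U) v \<noteq> (0::'k)"
        using TC0 unfolding TC[OF CP] C(2)[symmetric] by auto
      have lu: "length u = card ({1..n} - U)" using S_words_nz[OF S1] .
      have lv: "length v = card U" using S_words_nz[OF S2] .
      define ps where "ps = map (\<lambda>j. j \<notin> U) [1..<n+1]"
      have "length (filter id ps) = length (filter (\<lambda>j. j \<notin> U) [1..<n+1])"
        unfolding ps_def by (simp add: filter_map o_def)
      also have "\<dots> = card {j \<in> {1..<n+1}. j \<notin> U}"
        by (subst distinct_card[symmetric]) (auto simp del: upt_Suc)
      also have "{j \<in> {1..<n+1}. j \<notin> U} = {1..n} - U" by auto
      finally have f1: "length u = length (filter id ps)" using lu by (simp add: id_def)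
      have "length (filter Not ps) = length (filter (\<lambda>j. j \<in> U) [1..<n+1])"
        unfolding ps_def by (simp add: filter_map o_def)
      also have "\<dots> = card {j \<in> {1..<n+1}. j \<in> U}"
        by (subst distinct_card[symmetric]) (auto simp del: upt_Suc)
      also have "{j \<in> {1..<n+1}. j \<in> U} = U" using Us by auto
      finally have f2: "length v = length (filter Not ps)" using lv by simp
      obtain w where w: "map isl w = ps" "projA w = u" "projB w = v"
        using exists_word[OF f1 f2] by blast
      have l: "length w = n" using arg_cong[OF w(1), of length] unfolding ps_def by simp
      have islj: "isl (w ! (j - 1)) \<longleftrightarrow> j \<notin> U" if j: "j \<in> {1..n}" for j
      proof -
        have "j - 1 < length w" using j l by auto
        then have "isl (w ! (j - 1)) = map isl w ! (j - 1)" by simp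
        also have "\<dots> = (j \<notin> U)" unfolding w(1) ps_def by (rule map_upt_nth[OF j])
        finally show ?thesis .
      qed
      have BU: "Bp w = U" unfolding Bp_def posn_def using islj l Us by auto
      have st: "stable \<sigma> (posn (\<lambda>x. \<not> isl x) w)" using Ust BU unfolding Bp_def by simp
      have Ac: "posn isl w = {1..n} - U" using posn_compl[of w] l BU unfolding Bp_def by simp
      have "(S_AB \<sigma> n w :: 'k) = T C"
        unfolding TC[OF CP] valid_split[OF p l st] Ac C(2)[symmetric] BU[unfolded Bp_def] w(2,3) ..
      then have "w \<in> V" using TC0 w unfolding V_def W_def by simp
      then show "U \<in> Bp ` V" using BU by blast
    qed
  qed
  have "card V = card G"
    using card_image[OF injB] card_image[OF injU] imgs by simp
  then show ?thesis using L R unfolding T_def by simp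
qed

theorem theorem4p1:
  fixes dummy :: "'k::field itself"
  shows
  "(\<forall>n \<sigma> w. \<sigma> permutes {1..n} \<longrightarrow> (S \<sigma> n w :: 'k) = S_words \<sigma> n w)
   \<and> (\<forall>(F :: (nat \<times> (nat \<Rightarrow> nat)) set) (c :: nat \<times> (nat \<Rightarrow> nat) \<Rightarrow> 'k).
        finite F \<and> F \<subseteq> {(n, \<sigma>). \<sigma> permutes {1..n}} \<and>
        (\<forall>w. (\<Sum>(n, \<sigma>)\<in>F. c (n, \<sigma>) * S \<sigma> n w) = 0)
        \<longrightarrow> (\<forall>p\<in>F. c p = 0))
   \<and> (\<forall>n m \<sigma> \<tau>. \<sigma> permutes {1..n} \<and> \<tau> permutes {1..m} \<longrightarrow>
        series_mult (S \<sigma> n) (S \<tau> m) = (S (shift_concat \<sigma> n \<tau> m) (n + m) :: letter list \<Rightarrow> 'k))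
   \<and> (\<forall>n \<sigma> u v. \<sigma> permutes {1..n} \<longrightarrow>
        commute_image (S_AB \<sigma> n) u v =
        (\<Sum>C\<in>Pow (cycles \<sigma> n).
           (S (std \<sigma> ({1..n} - \<Union>C)) (card ({1..n} - \<Union>C)) u :: 'k) *
           S (std \<sigma> (\<Union>C)) (card (\<Union>C)) v))"
  proof (intro conjI allI impI)
  fix n :: nat and \<sigma> :: "nat \<Rightarrow> nat" and w assume "\<sigma> permutes {1..n}"
  then show "(S \<sigma> n w :: 'k) = S_words \<sigma> n w" by (rule S_eq_words)
next
  fix F :: "(nat \<times> (nat \<Rightarrow> nat)) set" and c :: "nat \<times> (nat \<Rightarrow> nat) \<Rightarrow> 'k"
  assume "finite F \<and> F \<subseteq> {(n, \<sigma>). \<sigma> permutes {1..n}} \<and>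
        (\<forall>w. (\<Sum>(n, \<sigma>)\<in>F. c (n, \<sigma>) * S \<sigma> n w) = 0)"
  then show "\<forall>p\<in>F. c p = 0" using part2[of F c] by blast
next
  fix n m :: nat and \<sigma> \<tau> :: "nat \<Rightarrow> nat" assume "\<sigma> permutes {1..n} \<and> \<tau> permutes {1..m}"
  then show "series_mult (S \<sigma> n) (S \<tau> m) = (S (shift_concat \<sigma> n \<tau> m) (n + m) :: letter list \<Rightarrow> 'k)"
    using part3 by blast
next
  fix n :: nat and \<sigma> :: "nat \<Rightarrow> nat" and u v assume "\<sigma> permutes {1..n}"
  then show "commute_image (S_AB \<sigma> n) u v =
        (\<Sum>C\<in>Pow (cycles \<sigma> n).
           (S (std \<sigma> ({1..n} - \<Union>C)) (card ({1..n} - \<Union>C)) u :: 'k) *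
           S (std \<sigma> (\<Union>C)) (card (\<Union>C)) v)" by (rule part4)
qed

end
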